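(* Let $\mathbb{F}_q$ be a fixed finite field with $q$ odd and $q\equiv1\pmod 4$. Then, as $g\to\infty$, $$\#\{P\in\mathbb{F}_q[T] \text{ monic irreducible}: \deg P=2g+1,\ L(\tfrac12,\chi_P)\neq 0\}\gg \frac{|P|}{(\log_q|P|)^2},$$ where $|P|=q^{2g+1}$ and $\log_q|P|=2g+1$.
   Context: $A=\mathbb{F}_q[T]$; for nonzero $f\in A$, $|f|=q^{\deg f}$. For a monic irreducible $Q$ and $a\in A$, $\left(\frac{a}{Q}\right)$ is $0$ if $Q\mid a$, $1$ if $a$ is a nonzero square mod $Q$, $-1$ otherwise; extended to monic $f=\prod Q_i^{e_i}$ by $\left(\frac{a}{f}\right)=\prod\left(\frac{a}{Q_i}\right)^{e_i}$, $\left(\frac{a}{1}\right)=1$. For monic irreducible $P$, $\chi_P(f)=\left(\frac{P}{f}\right)$. For $P$ of odd degree $2g+1$, $L(s,\chi_P)=\sum_{f\text{ monic}}\chi_P(f)|f|^{-s}$ is a polynomial in $u=q^{-s}$ of degree $2g$, and $L(\tfrac12,\chi_P)$ is its value at $u=q^{-1/2}$. The implied constant may depend on $q$. *)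

theory Defs
  imports "HOL-Analysis.Analysis" "HOL-Computational_Algebra.Computational_Algebra"
begin

definition leg_sym :: "'a::{field_gcd,finite} poly \<Rightarrow> 'a poly \<Rightarrow> int" where
  "leg_sym a Q = (if Q dvd a then 0
                  else if (\<exists>b. b^2 mod Q = a mod Q) then 1 else -1)"

definition jac_sym :: "'a::{field_gcd,finite} poly \<Rightarrow> 'a poly \<Rightarrow> int" where
  "jac_sym a f = (\<Prod>Q\<in>#prime_factorization f. leg_sym a Q)"

definition chi :: "'a::{field_gcd,finite} poly \<Rightarrow> 'a poly \<Rightarrow> int" where
  "chi P f = jac_sym P f"

text \<open>Coefficient of u^n in L(s,chi_P) = sum over lead_coeff f = 1 of chi_P(f) u^(deg f).\<close>
definition L_coeff :: "'a::{field_gcd,finite} poly \<Rightarrow> nat \<Rightarrow> int" where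
  "L_coeff P n = (\<Sum>f\<in>{f. lead_coeff f = 1 \<and> degree f = n}. chi P f)"

text \<open>L(1/2,chi_P): the series in u evaluated at u = q^(-1/2).\<close>
definition L_half :: "'a::{field_gcd,finite} poly \<Rightarrow> real" where
  "L_half P = (\<Sum>n. real_of_int (L_coeff P n) * (real CARD('a) powr (-1/2)) ^ n)"

end

theory Submission
  imports Defs "HOL-Algebra.Algebraic_Closure_Type" "HOL-Algebra.Sylow" "HOL-Number_Theory.Residues"
begin

hide_const (open) Divisibility.prime Divisibility.irreducible up_ring.coeff UnivPoly.monom
  Polynomials.lead_coeff Polynomials.degree module.smult


lemma nat_all_primes_eq_power:
  fixes n p :: nat
  assumes "n > 0" "\<And>r. prime r \<Longrightarrow> r dvd n \<Longrightarrow> r = p"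
  shows "\<exists>k. n = p ^ k"
  using assms
proof (induction n rule: less_induct)
  case (less n)
  show ?case
  proof (cases "n = 1")
    case True then show ?thesis by (intro exI[of _ 0]) auto
  next
    case False
    then obtain r where r: "prime r" "r dvd n" using prime_factor_nat by blast
    then have rp: "r = p" using less.prems by blast
    then obtain m where m: "n = p * m" using r by (auto elim: dvdE)
    have "m < n" using m less.prems(1) r rp prime_gt_1_nat by (simp add: m)
    moreover have "m > 0" using m less.prems(1) by auto
    moreover have "\<And>r. prime r \<Longrightarrow> r dvd m \<Longrightarrow> r = p" using less.prems(2) m by auto
    ultimately obtain k where "m = p ^ k" using less.IH by blast
    then show ?thesis using m by (intro exI[of _ "Suc k"]) auto
  qed
qed

lemma add_pow_eq_of_nat:
  fixes x :: "'a::ring_1"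
  shows "x [^]\<^bsub>\<lparr>carrier = UNIV, monoid.mult = (+), one = (0::'a)\<rparr>\<^esub> (n::nat) = of_nat n * x"
  by (induction n) (auto simp: algebra_simps)

lemma card_finite_field_prime_power:
  "\<exists>k. CARD('a::{field,finite}) = CHAR('a) ^ k"
proof (rule nat_all_primes_eq_power)
  show "CARD('a) > 0" by simp
next
  fix r assume r: "prime r" "r dvd CARD('a)"
  have pchar: "prime CHAR('a)"
    using prime_CHAR_semidom[where ?'a='a] finite_imp_CHAR_pos[where ?'a='a] by auto
  show "r = CHAR('a)"
  proof (rule ccontr)
    assume ne: "r \<noteq> CHAR('a)"
    define G where "G = \<lparr> carrier = (UNIV :: 'a set), monoid.mult = (+), one = (0 :: 'a) \<rparr>"
    interpret group G
    proof (rule groupI)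
      fix x assume x: "x \<in> carrier G"
      show "\<exists>y\<in>carrier G. y \<otimes>\<^bsub>G\<^esub> x = \<one>\<^bsub>G\<^esub>"
        by (intro bexI[of _ "-x"]) (auto simp: G_def)
    qed (auto simp: G_def add_ac)
    obtain m where m: "CARD('a) = r * m" using r by (auto elim: dvdE)
    have "\<exists>H. subgroup H G \<and> card H = r ^ 1"
      proof (rule sylow_thm[of r G 1 m])
      show "group G" by (rule is_group)
      show "order G = r ^ 1 * m" using m by (simp add: G_def order_def)
      show "finite (carrier G)" by (simp add: G_def)
    qed (use r in simp)
    then obtain H where H: "subgroup H G" "card H = r" by auto
    interpret HG: group "G\<lparr>carrier := H\<rparr>" using subgroup_imp_group[OF H(1)] .
    have "card H \<ge> 2" using H(2) r prime_ge_2_nat by auto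
    then have "\<not> H \<subseteq> {0}"
      using card_mono[of "{0::'a}" H] by fastforce
    then obtain h where h: "h \<in> H" "h \<noteq> 0" by auto
    have "h [^]\<^bsub>G\<lparr>carrier := H\<rparr>\<^esub> order (G\<lparr>carrier := H\<rparr>) = \<one>\<^bsub>G\<lparr>carrier := H\<rparr>\<^esub>"
      using HG.pow_order_eq_1[of h] h by simp
    moreover have "order (G\<lparr>carrier := H\<rparr>) = r" using H(2) by (simp add: order_def)
    moreover have "h [^]\<^bsub>G\<lparr>carrier := H\<rparr>\<^esub> (n::nat) = h [^]\<^bsub>G\<^esub> n" for n
      by (simp add: nat_pow_def)
    ultimately have hr: "of_nat r * h = 0"
      using add_pow_eq_of_nat[of h r] by (simp add: G_def)
    have hp: "of_nat CHAR('a) * h = 0" by simp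
    have cop: "gcd r CHAR('a) = 1"
      using r(1) pchar ne by (simp add: primes_coprime)
    obtain x y where xy: "r * x = CHAR('a) * y + 1"
      using bezout_nat[of r "CHAR('a)"] r(1) cop by (auto simp: prime_gt_0_nat)
    have "of_nat (r * x) * h = (of_nat (CHAR('a) * y + 1) :: 'a) * h" using xy by simp
    then have "of_nat x * (of_nat r * h) = of_nat y * (of_nat CHAR('a) * h) + h"
      by (simp add: algebra_simps)
    then have "h = 0" using hr hp by simp
    with h show False by simp
  qed
qed


lemma finite_field_pow_card:
  fixes x :: "'a::{field,finite}"
  shows "x ^ CARD('a) = x"
proof (cases "x = 0")
  case False
  have "x * (\<Prod>y\<in>UNIV-{0}. x * y) = x * x ^ (card (UNIV :: 'a set) - 1) * \<Prod>(UNIV-{0})"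
    by (simp add: prod.distrib mult_ac)
  also have "x * x ^ (card (UNIV :: 'a set) - 1) = x ^ Suc (card (UNIV :: 'a set) - 1)"
    by (subst power_Suc) auto
  also have "Suc (card (UNIV :: 'a set) - 1) = card (UNIV :: 'a set)"
    using finite_UNIV_card_ge_0[where ?'a = 'a] by simp
  also have "(\<Prod>y\<in>UNIV-{0}. x * y) = (\<Prod>y\<in>UNIV-{0}. y)"
    by (rule prod.reindex_bij_witness[of _ "\<lambda>y. y / x" "\<lambda>y. x * y"]) (use False in auto)
  finally show ?thesis
    by simp
qed (use finite_UNIV_card_ge_0[where ?'a = 'a] in auto)

lemma finite_field_pow_card_power:
  fixes x :: "'a::{field,finite}"
  shows "x ^ (CARD('a) ^ n) = x"
  by (induction n) (simp_all add: finite_field_pow_card power_mult)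

lemma prime_CHAR_finite_field: "prime CHAR('a::{field,finite})"
  using prime_CHAR_semidom[where ?'a='a] finite_imp_CHAR_pos[where ?'a='a] by auto

lemma frob_poly:
  fixes f :: "'b::comm_ring_1 poly"
  assumes "prime CHAR('b)" "m = CHAR('b)^k" "\<And>i. coeff f i ^ m = coeff f i"
  shows "poly f (x^m) = (poly f x)^m"
proof -
  have "(poly f x)^m = (\<Sum>i\<le>degree f. coeff f i * x ^ i) ^ m" by (simp add: poly_altdef)
  also have "\<dots> = (\<Sum>i\<le>degree f. (coeff f i * x ^ i) ^ m)"
    by (rule freshmans_dream_sum'[OF assms(1,2)])
  also have "\<dots> = (\<Sum>i\<le>degree f. coeff f i * (x ^ m) ^ i)"
    by (simp add: power_mult_distrib assms(3) flip: power_mult) (simp add: mult.commute)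
  finally show ?thesis by (simp add: poly_altdef)
qed

lemma frob_sum:
  fixes x y :: "'b::comm_ring_1"
  assumes "prime CHAR('b)" "m = CHAR('b)^k"
  shows "(x + y)^m = x^m + y^m"
  by (rule freshmans_dream'[OF assms])

lemma frob_diff:
  fixes x y :: "'b::comm_ring_1"
  assumes "prime CHAR('b)" "m = CHAR('b)^k"
  shows "(x - y)^m = x^m - y^m"
proof -
  have "((x - y) + y)^m = (x-y)^m + y^m" by (rule frob_sum[OF assms])
  then show ?thesis by simp
qed

subsection \<open>Counting polynomials\<close>

definition polys_below :: "nat \<Rightarrow> 'a::zero poly set" where
  "polys_below d = {f. \<forall>i\<ge>d. coeff f i = 0}"

lemma polys_below_eq: "d > 0 \<Longrightarrow> polys_below d = {f. degree f < d}"
  unfolding polys_below_def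
  by (auto simp: coeff_eq_0 intro: le_degree leI)

lemma card_polys_below:
  "card (polys_below d :: 'a::{zero,finite} poly set) = CARD('a)^d \<and> finite (polys_below d :: 'a poly set)"
proof -
  let ?L = "{xs :: 'a list. set xs \<subseteq> UNIV \<and> length xs = d}"
  have bij: "bij_betw (\<lambda>xs. Poly xs) ?L (polys_below d)"
  proof (rule bij_betw_byWitness[of _ "\<lambda>f. map (coeff f) [0..<d]"])
    show "\<forall>a\<in>?L. map (coeff (Poly a)) [0..<d] = a"
      by (auto intro!: nth_equalityI simp: nth_default_nth)
    show "\<forall>f\<in>polys_below d. Poly (map (coeff f) [0..<d]) = f"
      by (auto simp: polys_below_def poly_eq_iff nth_default_def)
    show "Poly ` ?L \<subseteq> polys_below d"
      by (auto simp: polys_below_def nth_default_def)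
    show "(\<lambda>f. map (coeff f) [0..<d]) ` polys_below d \<subseteq> ?L" by auto
  qed
  have "card ?L = CARD('a)^d" using card_lists_length_eq[of "UNIV::'a set" d] by simp
  moreover have "finite ?L" using finite_lists_length_eq[of "UNIV::'a set" d] by simp
  ultimately show ?thesis using bij_betw_same_card[OF bij] bij_betw_finite[OF bij] by simp
qed

definition monic_deg :: "nat \<Rightarrow> 'a::{zero,one} poly set" where
  "monic_deg n = {f. lead_coeff f = 1 \<and> degree f = n}"

lemma monic_deg_image:
  "monic_deg n = (\<lambda>g. monom (1::'a::comm_ring_1) n + g) ` polys_below n"
proof (rule Set.set_eqI, rule iffI)
  fix f :: "'a poly" assume f: "f \<in> monic_deg n"
  then have "f - monom 1 n \<in> polys_below n"
    by (auto simp: monic_deg_def polys_below_def coeff_monom coeff_eq_0)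
  then show "f \<in> (\<lambda>g. monom 1 n + g) ` polys_below n"
    by (intro image_eqI[of _ _ "f - monom 1 n"]) auto
next
  fix f :: "'a poly" assume "f \<in> (\<lambda>g. monom 1 n + g) ` polys_below n"
  then obtain g where g: "g \<in> polys_below n" "f = monom 1 n + g" by auto
  have c: "coeff f i = (if i = n then 1 else if i > n then 0 else coeff g i)" for i
    using g by (auto simp: polys_below_def coeff_monom)
  have "degree f = n"
    by (rule antisym, rule degree_le) (use c in \<open>auto intro: le_degree\<close>)
  then show "f \<in> monic_deg n" using c by (simp add: monic_deg_def)
qed

lemma card_monic_deg:
  "card (monic_deg n :: 'a::{comm_ring_1,finite} poly set) = CARD('a)^n \<and> finite (monic_deg n :: 'a poly set)"
proof -
  have inj: "inj_on (\<lambda>g. monom (1::'a) n + g) (polys_below n)" by (auto intro: inj_onI)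
  show ?thesis
    unfolding monic_deg_image using card_image[OF inj] card_polys_below[where ?'a='a, of n] by auto
qed



abbreviation lift :: "'a::field poly \<Rightarrow> 'a alg_closure poly" where
  "lift \<equiv> map_poly to_ac"

lemma coeff_lift [simp]: "coeff (lift f) n = to_ac (coeff f n)"
  by (simp add: coeff_map_poly)

lemma lift_add [simp]: "lift (f + g) = lift f + lift g"
  by (simp add: poly_eq_iff)

lemma lift_diff [simp]: "lift (f - g) = lift f - lift g"
  by (simp add: poly_eq_iff)

lemma lift_mult [simp]: "lift (f * g) = lift f * lift g"
  by (simp add: poly_eq_iff coeff_mult to_ac_sum)

lemma lift_1 [simp]: "lift 1 = 1"
  by simp

lemma lift_0 [simp]: "lift 0 = 0"
  by simp

lemma lift_power [simp]: "lift (f ^ n) = lift f ^ n"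
  by (induction n) auto

lemma lift_const [simp]: "lift [:c:] = [:to_ac c:]"
  by (simp add: poly_eq_iff coeff_pCons split: nat.splits)

lemma degree_lift [simp]: "degree (lift f) = degree f"
  by (simp add: degree_map_poly)

lemma lead_coeff_lift [simp]: "lead_coeff (lift f) = to_ac (lead_coeff f)"
  by simp

lemma lift_eq_iff [simp]: "lift f = lift g \<longleftrightarrow> f = g"
  by (auto simp: poly_eq_iff)

lemma lift_eq_0_iff [simp]: "lift f = 0 \<longleftrightarrow> f = 0"
  using lift_eq_iff[of f 0] by (simp del: lift_eq_iff)

lemma CHAR_ac: "CHAR('a::{field,finite} alg_closure) = CHAR('a)"
  by simp

lemma q_power_char_power:
  "\<exists>k. CARD('a::{field,finite})^e = CHAR('a alg_closure)^k"
proof -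
  obtain k where "CARD('a) = CHAR('a)^k" using card_finite_field_prime_power by blast
  then show ?thesis by (intro exI[of _ "k*e"]) (simp add: power_mult)
qed

lemma prime_CHAR_ac: "prime CHAR('a::{field,finite} alg_closure)"
  using prime_CHAR_finite_field[where ?'a='a] by simp

lemma frob_lift:
  fixes g :: "'a::{field,finite} poly"
  shows "poly (lift g) (x ^ (CARD('a)^e)) = (poly (lift g) x) ^ (CARD('a)^e)"
proof -
  obtain k where k: "CARD('a)^e = CHAR('a alg_closure)^k" using q_power_char_power by blast
  show ?thesis
  proof (rule frob_poly[OF prime_CHAR_ac k])
    fix i show "coeff (lift g) i ^ (CARD('a)^e) = coeff (lift g) i"
      by (simp del: to_ac_power add: to_ac_power[symmetric] finite_field_pow_card_power)
  qed
qed

lemma frob_ac_diff: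
  fixes x y :: "'a::{field,finite} alg_closure"
  shows "(x - y) ^ (CARD('a)^e) = x ^ (CARD('a)^e) - y ^ (CARD('a)^e)"
proof -
  obtain k where k: "CARD('a)^e = CHAR('a alg_closure)^k" using q_power_char_power by blast
  show ?thesis by (rule frob_diff[OF prime_CHAR_ac k])
qed

lemma frob_ac_inj:
  fixes x y :: "'a::{field,finite} alg_closure"
  assumes "x ^ (CARD('a)^e) = y ^ (CARD('a)^e)"
  shows "x = y"
proof -
  have "(x - y) ^ (CARD('a)^e) = 0" using assms frob_ac_diff[of x y e] by simp
  then show ?thesis by simp
qed

lemma card_field_ge2: "CARD('a::{field,finite}) \<ge> 2"
proof -
  have "card {0::'a, 1} \<le> CARD('a)" by (rule card_mono) auto
  then show ?thesis by simp
qed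

lemma pow_q_pow_add:
  fixes x :: "'b::monoid_mult"
  shows "x ^ (q^(a+b)) = (x ^ (q^a)) ^ (q^b)"
  by (simp add: power_add power_mult)

subsection \<open>Roots of irreducible polynomials in the algebraic closure\<close>

lemma irreducible_degree_pos:
  fixes Q :: "'a::field poly"
  assumes "irreducible Q"
  shows "degree Q > 0"
proof -
  have "Q \<noteq> 0" "\<not> is_unit Q" using assms irreducible_not_unit by auto
  then show ?thesis using is_unit_iff_degree[of Q] by auto
qed

lemma exists_root_lift:
  fixes Q :: "'a::field poly"
  assumes "degree Q > 0"
  shows "\<exists>\<beta>. poly (lift Q) \<beta> = 0"
  using alg_closed_imp_poly_has_root[of "lift Q"] assms by simp

lemma root_lift_iff_dvd:
  fixes Q g :: "'a::{field_gcd} poly"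
  assumes "irreducible Q" "poly (lift Q) \<beta> = 0"
  shows "poly (lift g) \<beta> = 0 \<longleftrightarrow> Q dvd g"
proof
  assume "Q dvd g"
  then obtain h where "g = Q * h" by (auto elim: dvdE)
  then show "poly (lift g) \<beta> = 0" using assms(2) by simp
next
  assume g0: "poly (lift g) \<beta> = 0"
  show "Q dvd g"
  proof (rule ccontr)
    assume "\<not> Q dvd g"
    moreover have "prime_elem Q" using assms(1) by (simp add: prime_elem_iff_irreducible)
    ultimately have "coprime Q g" using prime_elem_imp_coprime by blast
    then have "gcd Q g = 1" by simp
    then have "fst (bezout_coefficients Q g) * Q + snd (bezout_coefficients Q g) * g = 1"
      using bezout_coefficients_fst_snd[of Q g] by simp
    then have "poly (lift (fst (bezout_coefficients Q g) * Q + snd (bezout_coefficients Q g) * g)) \<beta> = 1"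
      by simp
    then show False using assms(2) g0 by simp
  qed
qed

lemma prod_roots_dvd:
  fixes p :: "'b::field poly"
  assumes "finite S" "\<forall>x\<in>S. poly p x = 0"
  shows "(\<Prod>x\<in>S. [:-x,1:]) dvd p"
  using assms
proof (induction S arbitrary: p rule: finite_induct)
  case empty then show ?case by simp
next
  case (insert x S)
  have "(\<Prod>x\<in>S. [:-x,1:]) dvd p" using insert by auto
  then obtain r where r: "p = (\<Prod>x\<in>S. [:-x,1:]) * r" by (auto elim: dvdE)
  have "poly (\<Prod>x\<in>S. [:-x,1:]) x \<noteq> 0"
    using insert(1,2) by (auto simp: poly_prod)
  moreover have "poly p x = 0" using insert by auto
  ultimately have "poly r x = 0" using r by simp
  then have "[:-x,1:] dvd r" by (simp add: poly_eq_0_iff_dvd)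
  then have "[:-x,1:] * (\<Prod>x\<in>S. [:-x,1:]) dvd (\<Prod>x\<in>S. [:-x,1:]) * r"
    using mult_dvd_mono[OF \<open>[:-x,1:] dvd r\<close> dvd_refl[of "\<Prod>x\<in>S. [:-x,1:]"]]
    by (simp only: mult.commute)
  then show ?case using r insert(1,2) by (simp del: mult_pCons_left add: prod.insert)
qed

lemma lift_card_polys_below:
  fixes Q :: "'a::{field_gcd,finite} poly"
  assumes "irreducible Q" "poly (lift Q) \<beta> = 0"
  shows "inj_on (\<lambda>g. poly (lift g) \<beta>) (polys_below (degree Q))"
proof (rule inj_onI)
  fix f g :: "'a poly"
  assume f: "f \<in> polys_below (degree Q)" and g: "g \<in> polys_below (degree Q)"
     and eq: "poly (lift f) \<beta> = poly (lift g) \<beta>"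
  have "poly (lift (f - g)) \<beta> = 0" using eq by simp
  then have dvd: "Q dvd (f - g)" using root_lift_iff_dvd[OF assms] by blast
  have dq: "degree Q > 0" using irreducible_degree_pos[OF assms(1)] .
  have "degree (f - g) < degree Q"
    using f g dq by (auto simp: polys_below_eq intro: degree_diff_less)
  then have "f - g = 0" using dvd
    by (metis dvd_imp_degree_le leD)
  then show "f = g" by simp
qed

lemma no_short_period:
  fixes Q :: "'a::{field_gcd,finite} poly"
  assumes "irreducible Q" "poly (lift Q) \<beta> = 0" "0 < e" "e < degree Q"
  shows "\<beta> ^ (CARD('a)^e) \<noteq> \<beta>"
proof
  assume per: "\<beta> ^ (CARD('a)^e) = \<beta>"
  define d where "d = degree Q"
  define F where "F = (\<lambda>g. poly (lift g) \<beta>) ` polys_below d"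
  have cF: "card F = CARD('a)^d"
    unfolding F_def d_def using card_image[OF lift_card_polys_below[OF assms(1,2)]]
      card_polys_below[where ?'a='a] by simp
  define m where "m = CARD('a)^e"
  define R :: "'a alg_closure poly" where "R = monom 1 m - [:0,1:]"
  have q2: "CARD('a) \<ge> 2" by (rule card_field_ge2)
  have "CARD('a)^1 \<le> CARD('a)^e" by (rule power_increasing) (use assms(3) q2 in auto)
  then have m2: "m \<ge> 2" unfolding m_def using q2 by simp
  have degR: "degree R = m"
  proof -
    have "degree (- [:0,1:] :: 'a alg_closure poly) < degree (monom (1::'a alg_closure) m)"
      using m2 by (simp add: degree_monom_eq)
    then have "degree (monom (1::'a alg_closure) m + - [:0,1:]) = degree (monom (1::'a alg_closure) m)"
      by (rule degree_add_eq_left)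
    then have "degree (monom (1::'a alg_closure) m + - [:0,1:]) = m" by (simp add: degree_monom_eq)
    then show ?thesis unfolding R_def by (simp only: diff_conv_add_uminus)
  qed
  then have R0: "R \<noteq> 0" using m2 by auto
  have sub: "F \<subseteq> {x. poly R x = 0}"
  proof
    fix x assume "x \<in> F"
    then obtain g where x: "x = poly (lift g) \<beta>" by (auto simp: F_def)
    have "x ^ m = poly (lift g) (\<beta> ^ m)" unfolding x m_def by (rule frob_lift[symmetric])
    also have "\<dots> = x" using per x by (simp add: m_def)
    finally show "x \<in> {x. poly R x = 0}" by (simp add: R_def poly_monom)
  qed
  have "card F \<le> card {x. poly R x = 0}"
    by (rule card_mono[OF poly_roots_finite[OF R0] sub])
  also have "\<dots> \<le> m" using card_poly_roots_bound[OF R0] degR by simp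
  also have "m < CARD('a)^d" unfolding m_def d_def
    by (rule power_strict_increasing) (use assms(4) q2 in auto)
  finally show False using cF by simp
qed

lemma roots_structure:
  fixes Q :: "'a::{field_gcd,finite} poly"
  assumes irr: "irreducible Q" and mon: "lead_coeff Q = 1" and root: "poly (lift Q) \<beta> = 0"
  shows "inj_on (\<lambda>i. \<beta> ^ (CARD('a)^i)) {..<degree Q}"
    and "lift Q = (\<Prod>i<degree Q. [:-(\<beta> ^ (CARD('a)^i)),1:])"
    and "\<beta> ^ (CARD('a)^(degree Q)) = \<beta>"
proof -
  define d where "d = degree Q"
  have d0: "d > 0" unfolding d_def by (rule irreducible_degree_pos[OF irr])
  have key: "\<beta> ^ (CARD('a)^j) = \<beta> ^ (CARD('a)^i) \<Longrightarrow> i < j \<Longrightarrow> j < d \<or> j = d \<Longrightarrow> i = 0 \<and> j = d" for i j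
  proof -
    assume eq: "\<beta> ^ (CARD('a)^j) = \<beta> ^ (CARD('a)^i)" and ij: "i < j" and jd: "j < d \<or> j = d"
    have "\<beta> ^ (CARD('a)^j) = (\<beta> ^ (CARD('a)^(j-i))) ^ (CARD('a)^i)"
      using pow_q_pow_add[of \<beta> "CARD('a)" "j-i" i] ij by simp
    then have "(\<beta> ^ (CARD('a)^(j-i))) ^ (CARD('a)^i) = \<beta> ^ (CARD('a)^i)" using eq by simp
    then have per: "\<beta> ^ (CARD('a)^(j-i)) = \<beta>" by (rule frob_ac_inj)
    show "i = 0 \<and> j = d"
    proof (rule ccontr)
      assume "\<not> (i = 0 \<and> j = d)"
      then have "j - i < d" using jd ij by auto
      then show False using no_short_period[OF irr root, of "j-i"] per ij by (simp add: d_def)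
    qed
  qed
  show inj: "inj_on (\<lambda>i. \<beta> ^ (CARD('a)^i)) {..<degree Q}"
  proof (rule inj_onI)
    fix i j assume i: "i \<in> {..<degree Q}" and j: "j \<in> {..<degree Q}"
      and eq: "\<beta> ^ (CARD('a)^i) = \<beta> ^ (CARD('a)^j)"
    show "i = j"
    proof (rule linorder_cases[of i j])
      assume "i < j" then show ?thesis using key[of j i] eq j by (auto simp: d_def)
    next
      assume "j < i" then show ?thesis using key[of i j] eq i by (auto simp: d_def)
    qed
  qed
  define S where "S = (\<lambda>i. \<beta> ^ (CARD('a)^i)) ` {..<d}"
  have rootsS: "\<forall>x\<in>S. poly (lift Q) x = 0"
    using root by (auto simp: S_def frob_lift)
  have "(\<Prod>x\<in>S. [:-x,1:]) = (\<Prod>i<d. [:-(\<beta> ^ (CARD('a)^i)),1:])"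
    unfolding S_def using inj by (subst prod.reindex) (auto simp: d_def)
  moreover have "(\<Prod>x\<in>S. [:-x,1:]) dvd lift Q"
    by (rule prod_roots_dvd) (use rootsS in \<open>auto simp: S_def\<close>)
  ultimately obtain r where r: "lift Q = (\<Prod>i<d. [:-(\<beta> ^ (CARD('a)^i)),1:]) * r"
    by (auto elim: dvdE)
  define P where "P = (\<Prod>i<d. [:-(\<beta> ^ (CARD('a)^i)),1:])"
  have degP: "degree P = d" unfolding P_def
    by (subst degree_prod_eq_sum_degree) auto
  have lcP: "lead_coeff P = 1" unfolding P_def by (simp add: lead_coeff_prod)
  have Q0: "lift Q \<noteq> 0" using d0 by (auto simp: d_def)
  then have r0: "r \<noteq> 0" and P0: "P \<noteq> 0" using r by (auto simp: P_def)
  have "degree (lift Q) = degree P + degree r" using r r0 P0 by (simp add: P_def degree_mult_eq)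
  then have "degree r = 0" using degP by (simp add: d_def)
  moreover have "lead_coeff (lift Q) = lead_coeff P * lead_coeff r"
    using r by (simp add: P_def lead_coeff_mult)
  then have "lead_coeff r = 1" using lcP mon by simp
  ultimately have "r = 1"
    by (auto elim!: degree_eq_zeroE)
  then show liftQ: "lift Q = (\<Prod>i<degree Q. [:-(\<beta> ^ (CARD('a)^i)),1:])"
    using r by (simp add: d_def)
  have "poly (lift Q) (\<beta> ^ (CARD('a)^d)) = 0" using root by (simp add: frob_lift)
  then have "(\<Prod>i<d. \<beta> ^ (CARD('a)^d) - \<beta> ^ (CARD('a)^i)) = 0"
    using liftQ by (simp add: poly_prod d_def)
  then obtain i where i: "i < d" "\<beta> ^ (CARD('a)^d) = \<beta> ^ (CARD('a)^i)" by auto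
  show "\<beta> ^ (CARD('a)^(degree Q)) = \<beta>"
  proof (cases "i = 0")
    case True then show ?thesis using i by (simp add: d_def)
  next
    case False then show ?thesis using key[of d i] i by auto
  qed
qed



lemma card_le_twice_image:
  assumes "finite A" "\<And>y. card {x\<in>A. f x = y} \<le> 2"
  shows "card A \<le> 2 * card (f ` A)"
proof -
  have "A = (\<Union>y\<in>f ` A. {x\<in>A. f x = y})" by auto
  then have "card A = card (\<Union>y\<in>f ` A. {x\<in>A. f x = y})" by simp
  also have "\<dots> \<le> (\<Sum>y\<in>f ` A. card {x\<in>A. f x = y})"
    by (rule card_UN_le) (use assms in auto)
  also have "\<dots> \<le> (\<Sum>y\<in>f ` A. 2)" by (rule sum_mono) (use assms in auto)
  finally show ?thesis by simp
qed

lemma card_sqrt_le2: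
  fixes y :: "'b::field"
  shows "card {z. z^2 = y} \<le> 2 \<and> finite {z. z^2 = y}"
proof -
  define R :: "'b poly" where "R = [:-y,0,1:]"
  have R0: "R \<noteq> 0" by (simp add: R_def)
  have "{z. z^2 = y} = {z. poly R z = 0}" by (auto simp: R_def power2_eq_square algebra_simps)
  moreover have "degree R = 2" by (simp add: R_def)
  ultimately show ?thesis using card_poly_roots_bound[OF R0] poly_roots_finite[OF R0] by simp
qed

lemma card_field_odd_ge3:
  assumes "odd CARD('a::{field,finite})"
  shows "CARD('a) \<ge> 3"
  using card_field_ge2[where ?'a='a] assms by presburger

lemma fermat_root:
  fixes Q b :: "'a::{field_gcd,finite} poly"
  assumes irr: "irreducible Q" and mon: "lead_coeff Q = 1" and root: "poly (lift Q) \<beta> = 0"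
    and nd: "\<not> Q dvd b"
  shows "(poly (lift b) \<beta>) ^ (CARD('a)^degree Q - 1) = 1"
proof -
  define x where "x = poly (lift b) \<beta>"
  have x0: "x \<noteq> 0" using root_lift_iff_dvd[OF irr root] nd by (simp add: x_def)
  have "x ^ (CARD('a)^degree Q) = poly (lift b) (\<beta> ^ (CARD('a)^degree Q))"
    by (simp add: x_def frob_lift)
  also have "\<dots> = x" using roots_structure(3)[OF irr mon root] by (simp add: x_def)
  finally have eq: "x ^ (CARD('a)^degree Q) = x" .
  have pos: "CARD('a)^degree Q \<ge> 1" by simp
  have "x * x ^ (CARD('a)^degree Q - 1) = x ^ (Suc (CARD('a)^degree Q - 1))" by (rule power_Suc[symmetric])
  also have "Suc (CARD('a)^degree Q - 1) = CARD('a)^degree Q" using pos by simp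
  finally have "x * x ^ (CARD('a)^degree Q - 1) = x * 1" using eq by simp
  then show ?thesis using x0 by (simp add: x_def)
qed

lemma euler_root:
  fixes Q a :: "'a::{field_gcd,finite} poly"
  assumes irr: "irreducible Q" and mon: "lead_coeff Q = 1" and root: "poly (lift Q) \<beta> = 0"
    and odd: "odd CARD('a)"
  shows "(poly (lift a) \<beta>) ^ ((CARD('a)^degree Q - 1) div 2) = of_int (leg_sym a Q)"
proof -
  define d where "d = degree Q"
  define M where "M = CARD('a)^d - 1"
  define h where "h = M div 2"
  have d0: "d > 0" unfolding d_def by (rule irreducible_degree_pos[OF irr])
  have q3: "CARD('a) \<ge> 3" by (rule card_field_odd_ge3[OF odd])
  have "CARD('a)^1 \<le> CARD('a)^d" by (rule power_increasing) (use d0 q3 in auto)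
  then have qd3: "CARD('a)^d \<ge> 3" using q3 by simp
  have "odd (CARD('a)^d)" using odd by simp
  then have M2: "M = 2 * h" unfolding h_def M_def using qd3 by presburger
  have h0: "h > 0" using M2 qd3 unfolding M_def by simp
  define x where "x = poly (lift a) \<beta>"
  have hh: "(CARD('a)^degree Q - 1) div 2 = h" by (simp add: h_def M_def d_def)
  have ferm: "\<And>b. \<not> Q dvd b \<Longrightarrow> (poly (lift b) \<beta>) ^ M = 1"
    using fermat_root[OF irr mon root] by (simp add: M_def d_def)
  show ?thesis
  proof (cases "Q dvd a")
    case True
    then have "x = 0" using root_lift_iff_dvd[OF irr root] by (simp add: x_def)
    then show ?thesis unfolding hh using True h0 by (simp add: leg_sym_def x_def)
  next
    case nd: False
    show ?thesis
    proof (cases "\<exists>b. b^2 mod Q = a mod Q")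
      case True
      then obtain b where b: "b^2 mod Q = a mod Q" by auto
      then have "Q dvd b^2 - a" by (simp add: mod_eq_dvd_iff)
      then have "poly (lift (b^2 - a)) \<beta> = 0" using root_lift_iff_dvd[OF irr root] by blast
      then have xb: "(poly (lift b) \<beta>)^2 = x" by (simp add: x_def)
      have "\<not> Q dvd b"
      proof
        assume "Q dvd b"
        then have "Q dvd b^2" by (simp add: power2_eq_square)
        then have "Q dvd b^2 - (b^2 - a)" using \<open>Q dvd b^2 - a\<close> by (rule dvd_diff)
        then show False using nd by simp
      qed
      then have "(poly (lift b) \<beta>) ^ M = 1" by (rule ferm)
      moreover have "x ^ h = (poly (lift b) \<beta>) ^ (2 * h)"
        unfolding xb[symmetric] by (rule power_mult[symmetric])
      ultimately have "x ^ h = 1" using M2 by simp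
      then show ?thesis using nd True by (simp add: leg_sym_def x_def h_def M_def d_def)
    next
      case nsq: False
      have "x ^ M = 1" using ferm[OF nd] by (simp add: x_def)
      moreover have "(x ^ h)^2 = x ^ (2 * h)" by (simp only: power_mult[symmetric] mult.commute)
      ultimately have "(x ^ h)^2 = 1" using M2 by simp
      then have pm: "x ^ h = 1 \<or> x ^ h = -1" by (simp add: power2_eq_1_iff)
      have "x ^ h \<noteq> 1"
      proof
        assume xh: "x ^ h = 1"
        define A where "A = polys_below d - {0 :: 'a poly}"
        define f where "f = (\<lambda>g. (poly (lift g) \<beta>)^2)"
        define R :: "'a alg_closure poly" where "R = monom 1 h - 1"
        have degR: "degree R = h"
        proof -
          have "degree (- 1 :: 'a alg_closure poly) < degree (monom (1::'a alg_closure) h)"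
            using h0 by (simp add: degree_monom_eq)
          then have "degree (monom (1::'a alg_closure) h + - 1) = degree (monom (1::'a alg_closure) h)"
            by (rule degree_add_eq_left)
          then show ?thesis unfolding R_def by (simp add: degree_monom_eq)
        qed
        then have R0: "R \<noteq> 0" using h0 by auto
        have finA: "finite A" using card_polys_below[where ?'a='a, of d] by (simp add: A_def)
        have cardA: "card A = 2 * h"
        proof -
          have "(0::'a poly) \<in> polys_below d" by (simp add: polys_below_def)
          then have "card A = card (polys_below d :: 'a poly set) - 1"
            unfolding A_def using card_polys_below[where ?'a='a, of d] card_Diff_singleton[of 0 "polys_below d :: 'a poly set"] by simp
          then show ?thesis using card_polys_below[where ?'a='a, of d] M2 by (simp add: M_def)
        qed
        have ndA: "\<not> Q dvd g" if "g \<in> A" for g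
        proof
          assume "Q dvd g"
          moreover have "g \<noteq> 0" "degree g < degree Q" using that d0 by (auto simp: A_def polys_below_eq d_def)
          ultimately show False using dvd_imp_degree_le[of Q g] by auto
        qed
        have fib: "card {g\<in>A. f g = y} \<le> 2" for y
        proof -
          have inj: "inj_on (\<lambda>g. poly (lift g) \<beta>) {g\<in>A. f g = y}"
            using lift_card_polys_below[OF irr root] by (rule inj_on_subset) (auto simp: A_def d_def)
          have "(\<lambda>g. poly (lift g) \<beta>) ` {g\<in>A. f g = y} \<subseteq> {z. z^2 = y}" by (auto simp: f_def)
          then have "card ((\<lambda>g. poly (lift g) \<beta>) ` {g\<in>A. f g = y}) \<le> card {z. z^2 = y}"
            using card_sqrt_le2[of y] by (intro card_mono) auto
          then show ?thesis using card_image[OF inj] card_sqrt_le2[of y] by simp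
        qed
        have sub: "insert x (f ` A) \<subseteq> {z. poly R z = 0}"
        proof
          fix z assume "z \<in> insert x (f ` A)"
          then show "z \<in> {z. poly R z = 0}"
          proof
            assume "z = x" then show ?thesis using xh by (simp add: R_def poly_monom)
          next
            assume "z \<in> f ` A"
            then obtain g where g: "g \<in> A" "z = f g" by auto
            have "(poly (lift g) \<beta>) ^ M = 1" using ferm[OF ndA[OF g(1)]] .
            moreover have "z ^ h = (poly (lift g) \<beta>) ^ (2 * h)"
              using g(2) unfolding f_def by (simp only: power_mult)
            ultimately have "z ^ h = 1" using M2 by simp
            then show ?thesis by (simp add: R_def poly_monom)
          qed
        qed
        have xnot: "x \<notin> f ` A"
        proof
          assume "x \<in> f ` A"
          then obtain g where g: "g \<in> A" "x = (poly (lift g) \<beta>)^2" by (auto simp: f_def)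
          then have "poly (lift (g^2 - a)) \<beta> = 0" by (simp add: x_def)
          then have "Q dvd g^2 - a" using root_lift_iff_dvd[OF irr root] by blast
          then have "g^2 mod Q = a mod Q" by (simp add: mod_eq_dvd_iff)
          then show False using nsq by blast
        qed
        have "card (insert x (f ` A)) \<le> card {z. poly R z = 0}"
          by (rule card_mono[OF poly_roots_finite[OF R0] sub])
        also have "\<dots> \<le> h" using card_poly_roots_bound[OF R0] degR by simp
        finally have "card (f ` A) + 1 \<le> h" using xnot finA by simp
        moreover have "card A \<le> 2 * card (f ` A)" by (rule card_le_twice_image[OF finA fib])
        ultimately show False using cardA h0 by simp
      qed
      then have "x ^ h = -1" using pm by simp
      then show ?thesis using nd nsq by (simp add: leg_sym_def x_def h_def M_def d_def)
    qed
  qed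
qed



lemma geom_nat: "(q - 1) * (\<Sum>i<d. q^i) = q^d - (1::nat)" if "q \<ge> 1" for q d
proof (induction d)
  case 0 then show ?case by simp
next
  case (Suc d)
  have "(q - 1) * (\<Sum>i<Suc d. q^i) = (q - 1) * (\<Sum>i<d. q^i) + (q - 1) * q^d" by (simp add: algebra_simps)
  also have "\<dots> = q^d - 1 + (q - 1) * q^d" using Suc by simp
  also have "\<dots> = q^Suc d - 1"
  proof -
    have "q^d \<ge> 1" using that by simp
    then show ?thesis using that by (simp add: algebra_simps diff_mult_distrib)
  qed
  finally show ?case .
qed

lemma card_odd_of_mod4:
  assumes "CARD('a::{field,finite}) mod 4 = 1"
  shows "odd CARD('a)"
  using assms by presburger

lemma CHAR_ge3:
  assumes "odd CARD('a::{field,finite})"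
  shows "CHAR('a) \<ge> 3"
proof -
  have "CHAR('a) dvd CARD('a)" by (rule CHAR_dvd_CARD)
  then have "odd CHAR('a)" using assms by (auto elim: dvdE)
  moreover have "CHAR('a) \<ge> 2" using prime_CHAR_finite_field[where ?'a='a] prime_ge_2_nat by blast
  ultimately show ?thesis by presburger
qed

lemma of_int_ac_inj3:
  assumes "odd CARD('a::{field,finite})" "a \<in> {-1,0,1}" "b \<in> {-1,0,1}"
    and "(of_int a :: 'a alg_closure) = of_int b"
  shows "a = b"
proof -
  have "(of_int (a - b) :: 'a alg_closure) = 0" using assms(4) by simp
  then have dv: "int CHAR('a) dvd a - b"
    using of_int_eq_0_iff_char_dvd[where ?'a="'a alg_closure", of "a-b"] by simp
  have c3: "int CHAR('a) \<ge> 3" using CHAR_ge3[OF assms(1)] by simp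
  have "\<bar>a - b\<bar> \<le> 2" using assms(2,3) by auto
  show ?thesis
  proof (rule ccontr)
    assume "a \<noteq> b"
    then have "a - b \<noteq> 0" by simp
    from dvd_imp_le_int[OF this dv] have "\<bar>int CHAR('a)\<bar> \<le> \<bar>a - b\<bar>" .
    then show False using c3 \<open>\<bar>a - b\<bar> \<le> 2\<close> by simp
  qed
qed

lemma leg_sym_range: "leg_sym a Q \<in> {-1, 0, 1}"
  by (simp add: leg_sym_def)

lemma reciprocity:
  fixes P Q :: "'a::{field_gcd,finite} poly"
  assumes irrP: "irreducible P" and monP: "lead_coeff P = 1"
    and irrQ: "irreducible Q" and monQ: "lead_coeff Q = 1"
    and q4: "CARD('a) mod 4 = 1"
  shows "leg_sym P Q = leg_sym Q P"
proof -
  have odd: "odd CARD('a)" using q4 by presburger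
  obtain \<beta> where \<beta>: "poly (lift Q) \<beta> = 0" using exists_root_lift irreducible_degree_pos[OF irrQ] by blast
  obtain \<alpha> where \<alpha>: "poly (lift P) \<alpha> = 0" using exists_root_lift irreducible_degree_pos[OF irrP] by blast
  define d where "d = degree Q"
  define N where "N = degree P"
  define q where "q = CARD('a)"
  define s where "s = (q - 1) div 2"
  have s_even: "even s" unfolding s_def q_def using q4 by presburger
  have q1: "q \<ge> 1" unfolding q_def by simp
  have eQ: "(q^d - 1) div 2 = (\<Sum>i<d. q^i) * s"
  proof -
    have "q - 1 = 2 * s" unfolding s_def q_def using odd by presburger
    then show ?thesis using geom_nat[OF q1, of d] by (simp add: mult.commute mult.left_commute)
  qed
  have eP: "(q^N - 1) div 2 = (\<Sum>j<N. q^j) * s"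
  proof -
    have "q - 1 = 2 * s" unfolding s_def q_def using odd by presburger
    then show ?thesis using geom_nat[OF q1, of N] by (simp add: mult.commute mult.left_commute)
  qed
  have facP: "lift P = (\<Prod>j<N. [:-(\<alpha> ^ (q^j)),1:])"
    using roots_structure(2)[OF irrP monP \<alpha>] by (simp add: N_def q_def)
  have facQ: "lift Q = (\<Prod>i<d. [:-(\<beta> ^ (q^i)),1:])"
    using roots_structure(2)[OF irrQ monQ \<beta>] by (simp add: d_def q_def)
  define Z where "Z = (\<Prod>i<d. \<Prod>j<N. \<beta> ^ (q^i) - \<alpha> ^ (q^j))"
  have X: "(poly (lift P) \<beta>) ^ (\<Sum>i<d. q^i) = Z"
  proof -
    have "(poly (lift P) \<beta>) ^ (\<Sum>i<d. q^i) = (\<Prod>i<d. (poly (lift P) \<beta>) ^ (q^i))"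
      by (rule power_sum)
    also have "\<dots> = (\<Prod>i<d. poly (lift P) (\<beta> ^ (q^i)))"
      by (simp add: q_def frob_lift)
    also have "\<dots> = Z" unfolding Z_def facP by (simp add: poly_prod)
    finally show ?thesis .
  qed
  have Y: "(poly (lift Q) \<alpha>) ^ (\<Sum>j<N. q^j) = (-1) ^ (d * N) * Z"
  proof -
    have "(poly (lift Q) \<alpha>) ^ (\<Sum>j<N. q^j) = (\<Prod>j<N. (poly (lift Q) \<alpha>) ^ (q^j))"
      by (rule power_sum)
    also have "\<dots> = (\<Prod>j<N. poly (lift Q) (\<alpha> ^ (q^j)))"
      by (simp add: q_def frob_lift)
    also have "\<dots> = (\<Prod>j<N. \<Prod>i<d. \<alpha> ^ (q^j) - \<beta> ^ (q^i))" unfolding facQ by (simp add: poly_prod)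
    also have "\<dots> = (\<Prod>j<N. \<Prod>i<d. - (\<beta> ^ (q^i) - \<alpha> ^ (q^j)))" by simp
    also have "\<dots> = (\<Prod>j<N. (-1)^d * (\<Prod>i<d. \<beta> ^ (q^i) - \<alpha> ^ (q^j)))"
      by (subst prod_uminus) simp
    also have "\<dots> = ((-1)^d)^N * (\<Prod>j<N. \<Prod>i<d. \<beta> ^ (q^i) - \<alpha> ^ (q^j))"
      by (simp add: prod.distrib)
    also have "(\<Prod>j<N. \<Prod>i<d. \<beta> ^ (q^i) - \<alpha> ^ (q^j)) = Z"
      unfolding Z_def by (rule prod.swap)
    finally show ?thesis by (simp add: power_mult)
  qed
  have "(of_int (leg_sym P Q) :: 'a alg_closure) = (poly (lift P) \<beta>) ^ ((q^d - 1) div 2)"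
    using euler_root[OF irrQ monQ \<beta> odd] by (simp add: q_def d_def)
  also have "\<dots> = Z ^ s" unfolding eQ by (simp add: power_mult X)
  also have "\<dots> = ((-1) ^ (d * N) * Z) ^ s"
  proof -
    have "((-1::'a alg_closure) ^ (d * N))^s = 1" using s_even
      by (simp add: power_mult[symmetric] mult.commute[of _ s])
    then show ?thesis by (simp add: power_mult_distrib)
  qed
  also have "\<dots> = (poly (lift Q) \<alpha>) ^ ((q^N - 1) div 2)" unfolding eP by (simp add: power_mult Y)
  also have "\<dots> = of_int (leg_sym Q P)"
    using euler_root[OF irrP monP \<alpha> odd] by (simp add: q_def N_def)
  finally show ?thesis using of_int_ac_inj3[OF odd leg_sym_range leg_sym_range] by blast
qed



lemma lift_pCons [simp]: "lift (pCons a p) = pCons (to_ac a) (lift p)"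
  by (simp add: poly_eq_iff coeff_pCons split: nat.split)

lemma monic_of_prime:
  fixes Q :: "'a::field_gcd poly"
  assumes "prime Q" shows "lead_coeff Q = 1"
proof -
  have Q0: "Q \<noteq> 0" using assms by auto
  then have l0: "lead_coeff Q \<noteq> 0" by simp
  have "is_unit (lead_coeff Q)" using l0 by (simp add: dvd_field_iff)
  then have n1: "normalize (lead_coeff Q) = 1" by (rule is_unit_normalize)
  have "unit_factor (lead_coeff Q) * normalize (lead_coeff Q) = lead_coeff Q"
    by (rule unit_factor_mult_normalize)
  then have uf: "unit_factor (lead_coeff Q) = lead_coeff Q" using n1 by simp
  have "lead_coeff Q = lead_coeff Q / unit_factor (lead_coeff Q)"
    using coeff_normalize[of Q "degree Q"] normalize_prime[OF assms] by simp
  then show ?thesis using uf l0 by (metis divide_self)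
qed

lemma normalize_monic:
  fixes f :: "'a::field_gcd poly"
  assumes "lead_coeff f = 1" shows "normalize f = f"
proof -
  have "unit_factor (1::'a) = 1" by simp
  then show ?thesis using assms by (simp add: poly_eq_iff coeff_normalize)
qed

lemma leg_sym_mod: "leg_sym (a mod Q) Q = leg_sym a Q"
  by (simp add: leg_sym_def dvd_mod_iff)

lemma leg_sym_one:
  assumes "irreducible Q" shows "leg_sym 1 Q = 1"
proof -
  have "\<not> Q dvd 1" using assms irreducible_not_unit by blast
  moreover have "\<exists>b. b^2 mod Q = 1 mod Q" by (intro exI[of _ 1]) simp
  ultimately show ?thesis by (simp add: leg_sym_def)
qed

lemma leg_mult:
  fixes Q a b :: "'a::{field_gcd,finite} poly"
  assumes irr: "irreducible Q" and mon: "lead_coeff Q = 1" and odd: "odd CARD('a)"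
  shows "leg_sym (a * b) Q = leg_sym a Q * leg_sym b Q"
proof -
  obtain \<beta> where \<beta>: "poly (lift Q) \<beta> = 0" using exists_root_lift irreducible_degree_pos[OF irr] by blast
  define h where "h = (CARD('a)^degree Q - 1) div 2"
  have e: "\<And>g. (poly (lift g) \<beta>)^h = (of_int (leg_sym g Q) :: 'a alg_closure)"
    unfolding h_def by (rule euler_root[OF irr mon \<beta> odd])
  have "(of_int (leg_sym (a*b) Q) :: 'a alg_closure) = (poly (lift (a*b)) \<beta>)^h"
    by (rule e[symmetric])
  also have "\<dots> = (poly (lift a) \<beta>)^h * (poly (lift b) \<beta>)^h" by (simp add: power_mult_distrib)
  also have "\<dots> = of_int (leg_sym a Q * leg_sym b Q)"
    by (simp add: e)
  finally have eq: "(of_int (leg_sym (a*b) Q) :: 'a alg_closure) = of_int (leg_sym a Q * leg_sym b Q)" .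
  have r: "leg_sym a Q * leg_sym b Q \<in> {-1,0,1}"
    using leg_sym_range[of a Q] leg_sym_range[of b Q] by auto
  show ?thesis by (rule of_int_ac_inj3[OF odd leg_sym_range r eq])
qed

lemma leg_prod_mset:
  fixes Q :: "'a::{field_gcd,finite} poly"
  assumes irr: "irreducible Q" and mon: "lead_coeff Q = 1" and odd: "odd CARD('a)"
  shows "leg_sym (prod_mset M) Q = (\<Prod>x\<in>#M. leg_sym x Q)"
proof (induction M)
  case empty then show ?case using leg_sym_one[OF irr] by simp
next
  case (add x M) then show ?case using leg_mult[OF irr mon odd] by simp
qed

lemma chi_eq_leg:
  fixes P f :: "'a::{field_gcd,finite} poly"
  assumes irrP: "irreducible P" and monP: "lead_coeff P = 1" and monf: "lead_coeff f = 1"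
    and q4: "CARD('a) mod 4 = 1"
  shows "chi P f = leg_sym f P"
proof -
  have odd: "odd CARD('a)" using q4 by presburger
  have f0: "f \<noteq> 0" using monf by auto
  have "chi P f = (\<Prod>Q\<in>#prime_factorization f. leg_sym P Q)" by (simp add: chi_def jac_sym_def)
  also have "\<dots> = (\<Prod>Q\<in>#prime_factorization f. leg_sym Q P)"
  proof (rule arg_cong[where f=prod_mset], rule image_mset_cong)
    fix Q assume "Q \<in># prime_factorization f"
    then have pQ: "prime Q" by (rule in_prime_factors_imp_prime)
    have "irreducible Q" using pQ by (simp add: prime_elem_iff_irreducible[symmetric])
    then show "leg_sym P Q = leg_sym Q P"
      by (rule reciprocity[OF irrP monP _ monic_of_prime[OF pQ] q4])
  qed
  also have "\<dots> = leg_sym (prod_mset (prime_factorization f)) P"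
    using leg_prod_mset[OF irrP monP odd] by simp
  also have "prod_mset (prime_factorization f) = f"
    using prod_mset_prime_factorization[OF f0] normalize_monic[OF monf] by simp
  finally show ?thesis .
qed

lemma char_neq_2_one: 
  assumes "odd CARD('a::{field,finite})"
  shows "(1::'a) \<noteq> -1"
proof
  assume "(1::'a) = -1"
  then have "(of_nat 2 :: 'a) = 0" by (simp add: eq_neg_iff_add_eq_0)
  then have "CHAR('a) dvd 2" by (simp only: of_nat_eq_0_iff_char_dvd)
  then have "CHAR('a) \<le> 2" by (simp add: dvd_imp_le)
  then show False using CHAR_ge3[OF assms] by simp
qed

lemma exists_nonsquare:
  assumes "odd CARD('a::{field,finite})"
  shows "\<exists>c::'a. \<forall>y. y^2 \<noteq> c"
proof (rule ccontr)
  assume "\<not> ?thesis"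
  then have "surj (\<lambda>y::'a. y^2)" unfolding surj_def by metis
  then have "inj (\<lambda>y::'a. y^2)" by (rule finite_UNIV_surj_inj[rotated]) simp
  moreover have "(1::'a)^2 = (-1)^2" by simp
  ultimately have "(1::'a) = -1" by (rule injD)
  then show False using char_neq_2_one[OF assms] by simp
qed

lemma euler_const:
  fixes c :: "'a::{field_gcd,finite}"
  assumes odd: "odd CARD('a)" and ns: "\<forall>y. y^2 \<noteq> c"
  shows "c ^ ((CARD('a) - 1) div 2) = -1"
proof -
  define Xp :: "'a poly" where "Xp = [:0,1:]"
  have irr: "irreducible Xp" unfolding Xp_def by (rule irreducible_linear_field_poly) simp
  have mon: "lead_coeff Xp = 1" by (simp add: Xp_def)
  have root: "poly (lift Xp) 0 = 0" by (simp add: Xp_def)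
  have dX: "degree Xp = 1" by (simp add: Xp_def)
  have c0: "c \<noteq> 0" using ns[rule_format, of 0] by auto
  have dvdX: "Xp dvd p \<longleftrightarrow> poly p 0 = 0" for p
    using poly_eq_0_iff_dvd[of p 0] by (simp add: Xp_def)
  have "\<not> Xp dvd [:c:]" using c0 dvdX by simp
  moreover have "\<not> (\<exists>b. b^2 mod Xp = [:c:] mod Xp)"
  proof
    assume "\<exists>b. b^2 mod Xp = [:c:] mod Xp"
    then obtain b where "b^2 mod Xp = [:c:] mod Xp" by auto
    then have "Xp dvd b^2 - [:c:]" by (simp add: mod_eq_dvd_iff)
    then have "(poly b 0)^2 = c" using dvdX by simp
    then show False using ns by auto
  qed
  ultimately have "leg_sym [:c:] Xp = -1" by (simp add: leg_sym_def)
  then have "(poly (lift [:c:]) 0) ^ ((CARD('a)^1 - 1) div 2) = (of_int (-1) :: 'a alg_closure)"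
    using euler_root[OF irr mon root odd, of "[:c:]"] dX by simp
  then have "to_ac (c ^ ((CARD('a) - 1) div 2)) = to_ac (-1)" by simp
  then show ?thesis by (simp only: to_ac_eq_iff)
qed

lemma odd_geom_sum:
  assumes "odd (q::nat)" shows "odd (\<Sum>j<N. q^j) \<longleftrightarrow> odd N"
  by (induction N) (use assms in auto)

lemma leg_const_nonsq:
  fixes P :: "'a::{field_gcd,finite} poly"
  assumes irr: "irreducible P" and mon: "lead_coeff P = 1" and oddN: "odd (degree P)"
    and odd: "odd CARD('a)" and ns: "\<forall>y. y^2 \<noteq> c"
  shows "leg_sym [:c:] P = -1"
proof -
  obtain \<alpha> where \<alpha>: "poly (lift P) \<alpha> = 0" using exists_root_lift irreducible_degree_pos[OF irr] by blast
  define q where "q = CARD('a)"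
  define N where "N = degree P"
  define s where "s = (q - 1) div 2"
  have q1: "q \<ge> 1" unfolding q_def by simp
  have eP: "(q^N - 1) div 2 = s * (\<Sum>j<N. q^j)"
  proof -
    have "q - 1 = 2 * s" unfolding s_def q_def using odd by presburger
    then show ?thesis using geom_nat[OF q1, of N] by (simp add: mult.commute mult.left_commute)
  qed
  have oG: "odd (\<Sum>j<N. q^j)" using odd_geom_sum[of q N] odd oddN by (simp add: q_def N_def)
  have cs: "c ^ s = -1" using euler_const[OF odd ns] by (simp add: s_def q_def)
  have "(of_int (leg_sym [:c:] P) :: 'a alg_closure) = (to_ac c) ^ ((q^N - 1) div 2)"
    using euler_root[OF irr mon \<alpha> odd, of "[:c:]"] by (simp add: q_def N_def)
  also have "\<dots> = (to_ac (c ^ s)) ^ (\<Sum>j<N. q^j)" unfolding eP by (simp add: power_mult)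
  also have "\<dots> = -1" using cs oG by simp
  finally have eq: "(of_int (leg_sym [:c:] P) :: 'a alg_closure) = of_int (-1)" by simp
  have "(-1::int) \<in> {-1,0,1}" by simp
  from of_int_ac_inj3[OF odd leg_sym_range this eq] show ?thesis .
qed



lemma monic_add_low:
  fixes f g :: "'a::comm_ring_1 poly"
  assumes "f \<in> monic_deg n" "degree g < n"
  shows "f + g \<in> monic_deg n"
proof -
  have df: "degree f = n" "lead_coeff f = 1" using assms(1) by (auto simp: monic_deg_def)
  have "degree (f + g) = n" using degree_add_eq_left[of g f] assms(2) df by simp
  moreover have "coeff g n = 0" using assms(2) by (simp add: coeff_eq_0)
  ultimately show ?thesis using df by (simp add: monic_deg_def)
qed

lemma leg_sum_zero:
  fixes P :: "'a::{field_gcd,finite} poly"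
  assumes irr: "irreducible P" and mon: "lead_coeff P = 1" and oddN: "odd (degree P)"
    and Nn: "degree P \<le> n" and odd: "odd CARD('a)"
  shows "(\<Sum>f\<in>monic_deg n. leg_sym f P) = 0"
proof -
  obtain c :: 'a where ns: "\<forall>y. y^2 \<noteq> c" using exists_nonsquare[OF odd] by blast
  have c0: "c \<noteq> 0" using ns[rule_format, of 0] by auto
  have N0: "degree P > 0" by (rule irreducible_degree_pos[OF irr])
  have P0: "P \<noteq> 0" using N0 by auto
  define M where "M = (monic_deg n :: 'a poly set)"
  define \<sigma> where "\<sigma> = (\<lambda>f. f + smult (c - 1) (f mod P))"
  define \<tau> where "\<tau> = (\<lambda>f. f + smult (inverse c - 1) (f mod P))"
  have modk: "(f + smult k (f mod P)) mod P = smult (1 + k) (f mod P)" for f k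
    by (simp add: poly_mod_add_left mod_smult_left algebra_simps smult_add_left)
  have degk: "degree (smult k (f mod P)) < n" for f k
  proof (cases "f mod P = 0")
    case True then show ?thesis using N0 Nn by simp
  next
    case False
    then have "degree (f mod P) < degree P" using degree_mod_less'[OF P0] by blast
    then show ?thesis using Nn degree_smult_le[of k "f mod P"] by linarith
  qed
  have \<sigma>M: "\<sigma> f \<in> M" if "f \<in> M" for f
    using monic_add_low[OF that[unfolded M_def] degk] by (simp add: \<sigma>_def M_def)
  have \<tau>M: "\<tau> f \<in> M" if "f \<in> M" for f
    using monic_add_low[OF that[unfolded M_def] degk] by (simp add: \<tau>_def M_def)
  have \<tau>\<sigma>: "\<tau> (\<sigma> f) = f" for f
  proof -
    have "\<sigma> f mod P = smult c (f mod P)" using modk[of f "c - 1"] by (simp add: \<sigma>_def)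
    then have "\<tau> (\<sigma> f) = f + smult (c - 1) (f mod P) + smult ((inverse c - 1) * c) (f mod P)"
      by (simp add: \<tau>_def \<sigma>_def)
    also have "(inverse c - 1) * c = 1 - c" using c0 by (simp add: algebra_simps)
    finally show ?thesis by (simp add: algebra_simps smult_add_left[symmetric])
  qed
  have \<sigma>\<tau>: "\<sigma> (\<tau> f) = f" for f
  proof -
    have "\<tau> f mod P = smult (inverse c) (f mod P)" using modk[of f "inverse c - 1"] by (simp add: \<tau>_def)
    then have "\<sigma> (\<tau> f) = f + smult (inverse c - 1) (f mod P) + smult ((c - 1) * inverse c) (f mod P)"
      by (simp add: \<tau>_def \<sigma>_def)
    also have "(c - 1) * inverse c = 1 - inverse c" using c0 by (simp add: algebra_simps)
    finally show ?thesis by (simp add: algebra_simps smult_add_left[symmetric])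
  qed
  have lc: "leg_sym [:c:] P = -1" by (rule leg_const_nonsq[OF irr mon oddN odd ns])
  have leg\<sigma>: "leg_sym (\<sigma> f) P = - leg_sym f P" for f
  proof -
    have "leg_sym (\<sigma> f) P = leg_sym (\<sigma> f mod P) P" by (simp add: leg_sym_mod)
    also have "\<sigma> f mod P = [:c:] * (f mod P)" using modk[of f "c - 1"] by (simp add: \<sigma>_def)
    also have "leg_sym ([:c:] * (f mod P)) P = leg_sym [:c:] P * leg_sym (f mod P) P"
      by (rule leg_mult[OF irr mon odd])
    finally show ?thesis using lc by (simp add: leg_sym_mod)
  qed
  have "(\<Sum>f\<in>M. - leg_sym f P) = (\<Sum>f\<in>M. leg_sym f P)"
    by (rule sum.reindex_bij_witness[of M \<tau> \<sigma>]) (auto simp: \<tau>\<sigma> \<sigma>\<tau> \<sigma>M \<tau>M leg\<sigma>)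
  then have "(\<Sum>f\<in>M. leg_sym f P) = 0" by (simp add: sum_negf)
  then show ?thesis by (simp add: M_def)
qed

lemma L_coeff_eq:
  fixes P :: "'a::{field_gcd,finite} poly"
  assumes irr: "irreducible P" and mon: "lead_coeff P = 1" and q4: "CARD('a) mod 4 = 1"
  shows "L_coeff P n = (\<Sum>f\<in>monic_deg n. leg_sym f P)"
  unfolding L_coeff_def monic_deg_def
  by (rule sum.cong) (use chi_eq_leg[OF irr mon _ q4] in auto)

lemma L_coeff_zero:
  fixes P :: "'a::{field_gcd,finite} poly"
  assumes irr: "irreducible P" and mon: "lead_coeff P = 1" and oddN: "odd (degree P)"
    and Nn: "degree P \<le> n" and q4: "CARD('a) mod 4 = 1"
  shows "L_coeff P n = 0"
proof -
  have odd: "odd CARD('a)" using q4 by presburger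
  show ?thesis using L_coeff_eq[OF irr mon q4] leg_sum_zero[OF irr mon oddN Nn odd] by simp
qed

lemma odd_sum_pm1:
  fixes g :: "'b \<Rightarrow> int"
  assumes "finite A" "\<forall>x\<in>A. g x = 1 \<or> g x = -1"
  shows "odd (sum g A) \<longleftrightarrow> odd (card A)"
  using assms by (induction A rule: finite_induct) auto

lemma L_coeff_odd:
  fixes P :: "'a::{field_gcd,finite} poly"
  assumes irr: "irreducible P" and mon: "lead_coeff P = 1"
    and nN: "n < degree P" and q4: "CARD('a) mod 4 = 1"
  shows "odd (L_coeff P n)"
proof -
  have odd: "odd CARD('a)" using q4 by presburger
  have pm: "\<forall>f\<in>monic_deg n. leg_sym f P = 1 \<or> leg_sym f P = -1"
  proof
    fix f :: "'a poly" assume f: "f \<in> monic_deg n"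
    then have "f \<noteq> 0" "degree f < degree P" using nN by (auto simp: monic_deg_def)
    then have "\<not> P dvd f" using dvd_imp_degree_le[of P f] by auto
    then show "leg_sym f P = 1 \<or> leg_sym f P = -1" by (simp add: leg_sym_def)
  qed
  have "odd (\<Sum>f\<in>monic_deg n. leg_sym f P)"
    using odd_sum_pm1[OF _ pm] card_monic_deg[where ?'a='a, of n] odd by simp
  then show ?thesis using L_coeff_eq[OF irr mon q4] by simp
qed



lemma sum_split_even_odd:
  fixes F :: "nat \<Rightarrow> 'b::comm_monoid_add"
  shows "(\<Sum>n<2*g+1. F n) = (\<Sum>k<g+1. F (2*k)) + (\<Sum>k<g. F (2*k+1))"
proof (induction g)
  case 0 then show ?case by simp
next
  case (Suc g)
  have "(\<Sum>n<2*Suc g+1. F n) = (\<Sum>n<2*g+1. F n) + F (2*g+1) + F (2*g+2)"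
    by (simp add: algebra_simps)
  also have "\<dots> = (\<Sum>k<Suc g+1. F (2*k)) + (\<Sum>k<Suc g. F (2*k+1))"
    using Suc by (simp add: algebra_simps)
  finally show ?case .
qed

lemma odd_sum_all_odd:
  fixes f :: "nat \<Rightarrow> int"
  assumes "\<And>k. k < m \<Longrightarrow> odd (f k)"
  shows "odd (\<Sum>k<m. f k) \<longleftrightarrow> odd m"
  using assms by (induction m) auto

lemma L_half_ne0:
  fixes P :: "'a::{field_gcd,finite} poly"
  assumes irr: "irreducible P" and mon: "lead_coeff P = 1" and deg: "degree P = 2*g+1"
    and q4: "CARD('a) mod 4 = 1"
  shows "L_half P \<noteq> 0"
proof -
  have oddq: "odd CARD('a)" using q4 by presburger
  define a where "a = L_coeff P"
  define qr where "qr = real CARD('a)"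
  define r where "r = sqrt qr"
  define s where "s = real CARD('a) powr (-1/2)"
  have qr0: "qr > 0" by (simp add: qr_def)
  have r0: "r > 0" using qr0 by (simp add: r_def)
  have r2: "r^2 = qr" using qr0 by (simp add: r_def)
  have s_eq: "s = inverse r"
    by (simp add: s_def r_def qr_def powr_minus powr_half_sqrt[symmetric] flip: powr_minus_divide)
  have s2: "s^2 = inverse qr" using r2 by (simp add: s_eq power_inverse)
  have zero: "a n = 0" if "n \<ge> 2*g+1" for n
    unfolding a_def by (rule L_coeff_zero[OF irr mon]) (use deg q4 that in auto)
  have odda: "odd (a n)" if "n < 2*g+1" for n
    unfolding a_def by (rule L_coeff_odd[OF irr mon _ q4]) (use deg that in auto)
  have "L_half P = (\<Sum>n. real_of_int (a n) * s ^ n)" by (simp add: L_half_def a_def s_def)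
  also have "\<dots> = (\<Sum>n<2*g+1. real_of_int (a n) * s ^ n)"
    by (rule suminf_finite) (use zero in auto)
  also have "\<dots> = (\<Sum>k<g+1. real_of_int (a (2*k)) * s^(2*k)) + (\<Sum>k<g. real_of_int (a (2*k+1)) * s^(2*k+1))"
    by (rule sum_split_even_odd)
  finally have L: "L_half P = \<dots>" .
  define XX where "XX = (\<Sum>k<g+1. a (2*k) * int CARD('a)^(g-k))"
  define YY where "YY = (\<Sum>k<g. a (2*k+1) * int CARD('a)^(g-k-1))"
  have e1: "qr^g * s^(2*k) = qr^(g-k)" if "k \<le> g" for k
  proof -
    have "qr^g = qr^(g-k) * qr^k" using that by (simp add: power_add[symmetric])
    moreover have "s^(2*k) = inverse qr ^ k" by (simp add: power_mult s2)
    ultimately show ?thesis using qr0 by (simp add: power_inverse field_simps)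
  qed
  have e2: "qr^g * s^(2*k+1) = qr^(g-k-1) * r" if "k < g" for k
  proof -
    have "qr^g * s^(2*k+1) = (qr^g * s^(2*k)) * s" by simp
    also have "\<dots> = qr^(g-k) * s" using e1[of k] that by simp
    also have "qr^(g-k) = qr^(g-k-1) * qr" using that by (simp add: power_Suc2[symmetric] Suc_diff_Suc)
    also have "qr^(g-k-1) * qr * s = qr^(g-k-1) * r"
      using r2 r0 by (simp add: s_eq field_simps power2_eq_square)
    finally show ?thesis .
  qed
  have main: "qr^g * L_half P = real_of_int XX + real_of_int YY * r"
  proof -
    have "qr^g * L_half P = (\<Sum>k<g+1. real_of_int (a (2*k)) * (qr^g * s^(2*k))) + (\<Sum>k<g. real_of_int (a (2*k+1)) * (qr^g * s^(2*k+1)))"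
      unfolding L by (simp add: distrib_left sum_distrib_left mult_ac)
    also have "(\<Sum>k<g+1. real_of_int (a (2*k)) * (qr^g * s^(2*k))) = (\<Sum>k<g+1. real_of_int (a (2*k)) * qr^(g-k))"
      by (rule sum.cong) (auto simp: e1)
    also have "\<dots> = real_of_int XX"
      unfolding XX_def by (simp add: qr_def)
    also have "(\<Sum>k<g. real_of_int (a (2*k+1)) * (qr^g * s^(2*k+1))) = (\<Sum>k<g. real_of_int (a (2*k+1)) * (qr^(g-k-1) * r))"
      by (rule sum.cong) (use e2 in \<open>auto simp del: power_Suc\<close>)
    also have "\<dots> = real_of_int YY * r"
      unfolding YY_def by (simp add: qr_def sum_distrib_right sum_distrib_left mult_ac)
    finally show ?thesis .
  qed
  have oX: "odd XX \<longleftrightarrow> odd (g+1)"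
    unfolding XX_def by (rule odd_sum_all_odd) (use odda oddq in auto)
  have oY: "odd YY \<longleftrightarrow> odd g"
    unfolding YY_def by (rule odd_sum_all_odd) (use odda oddq in auto)
  show ?thesis
  proof
    assume "L_half P = 0"
    then have "real_of_int XX = - (real_of_int YY * r)" using main by simp
    then have "(real_of_int XX)^2 = (real_of_int YY)^2 * r^2" by (simp add: power_mult_distrib)
    then have "real_of_int (XX^2) = real_of_int (YY^2 * int CARD('a))" using r2 by (simp add: qr_def)
    then have eq: "XX^2 = YY^2 * int CARD('a)" by (simp only: of_int_eq_iff)
    have "odd (XX^2) \<longleftrightarrow> odd XX" by simp
    moreover have "odd (YY^2 * int CARD('a)) \<longleftrightarrow> odd YY" using oddq by simp
    ultimately show False using eq oX oY by simp
  qed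
qed



lemma lift_monom [simp]: "lift (monom c n) = monom (to_ac c) n"
  by (simp add: poly_eq_iff coeff_monom)

lemma period_dvd:
  fixes Q :: "'a::{field_gcd,finite} poly"
  assumes irr: "irreducible Q" and mon: "lead_coeff Q = 1" and root: "poly (lift Q) \<beta> = 0"
    and per: "\<beta> ^ (CARD('a)^n) = \<beta>"
  shows "degree Q dvd n"
proof -
  define d where "d = degree Q"
  have pd: "\<beta> ^ (CARD('a)^d) = \<beta>" using roots_structure(3)[OF irr mon root] by (simp add: d_def)
  have pm: "\<beta> ^ (CARD('a)^(d*t)) = \<beta>" for t
  proof (induction t)
    case 0 then show ?case by simp
  next
    case (Suc t)
    have "\<beta> ^ (CARD('a)^(d*Suc t)) = (\<beta> ^ (CARD('a)^(d*t))) ^ (CARD('a)^d)"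
      using pow_q_pow_add[of \<beta> "CARD('a)" "d*t" d] by (simp add: algebra_simps)
    then show ?case using Suc pd by simp
  qed
  have "\<beta> ^ (CARD('a)^n) = (\<beta> ^ (CARD('a)^(d*(n div d)))) ^ (CARD('a)^(n mod d))"
    using pow_q_pow_add[of \<beta> "CARD('a)" "d*(n div d)" "n mod d"] by simp
  then have "\<beta> ^ (CARD('a)^(n mod d)) = \<beta>" using pm per by simp
  moreover have "d > 0" unfolding d_def by (rule irreducible_degree_pos[OF irr])
  ultimately have "n mod d = 0"
    using no_short_period[OF irr root, of "n mod d"] by (auto simp: d_def)
  then show ?thesis by (simp add: d_def mod_eq_0_iff_dvd)
qed

lemma of_nat_card_eq_0: "(of_nat CARD('a::{field,finite}) :: 'a) = 0"
  by (simp add: of_nat_eq_0_iff_char_dvd CHAR_dvd_CARD)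

definition Irr :: "nat \<Rightarrow> 'a::{field_gcd,finite} poly set" where
  "Irr n = {P. lead_coeff P = 1 \<and> irreducible P \<and> degree P = n}"

lemma Irr_sub: "Irr n \<subseteq> monic_deg n"
  by (auto simp: Irr_def monic_deg_def)

lemma finite_Irr: "finite (Irr n :: 'a::{field_gcd,finite} poly set)"
  using card_monic_deg[where ?'a='a, of n] Irr_sub finite_subset by blast

lemma card_Irr_le: "card (Irr n :: 'a::{field_gcd,finite} poly set) \<le> CARD('a)^n"
  using card_monic_deg[where ?'a='a, of n] Irr_sub card_mono by metis

lemma gauss_lower:
  assumes n0: "n > 0"
  shows "CARD('a::{field_gcd,finite})^n \<le> (\<Sum>d\<in>{d. d dvd n}. d * card (Irr d :: 'a poly set))"
proof -
  define m where "m = CARD('a)^n"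
  define F :: "'a poly" where "F = monom 1 m - [:0,1:]"
  have q2: "CARD('a) \<ge> 2" by (rule card_field_ge2)
  have "CARD('a)^1 \<le> CARD('a)^n" by (rule power_increasing) (use n0 q2 in auto)
  then have m2: "m \<ge> 2" using q2 by (simp add: m_def)
  have degF: "degree F = m"
  proof -
    have "degree (- [:0,1:] :: 'a poly) < degree (monom (1::'a) m)"
      using m2 by (simp add: degree_monom_eq)
    then have "degree (monom (1::'a) m + - [:0,1:]) = degree (monom (1::'a) m)"
      by (rule degree_add_eq_left)
    then have "degree (monom (1::'a) m + - [:0,1:]) = m" by (simp add: degree_monom_eq)
    then show ?thesis unfolding F_def by (simp only: diff_conv_add_uminus)
  qed
  have lcF: "lead_coeff F = 1"
  proof -
    have "coeff [:0,1::'a:] m = 0" using m2 by (simp add: coeff_eq_0)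
    then show ?thesis using degF by (simp add: F_def coeff_monom)
  qed
  have F0: "F \<noteq> 0" using lcF by auto
  have pdF: "pderiv F = -1"
  proof -
    have "of_nat m = (0::'a)" unfolding m_def using of_nat_card_eq_0[where ?'a='a] n0
      by (simp add: of_nat_power power_0_left)
    then show ?thesis by (simp add: F_def pderiv_diff pderiv_monom pderiv_pCons) (simp add: poly_eq_iff coeff_pCons split: nat.split)
  qed
  define PF where "PF = prime_factorization F"
  have sqf: "count PF Q \<le> 1" for Q
  proof (rule ccontr)
    assume "\<not> count PF Q \<le> 1"
    then have c2: "count PF Q \<ge> 2" by simp
    then have pQ: "prime Q" unfolding PF_def using count_prime_factorization_nonprime by fastforce
    then have "multiplicity Q F \<ge> 2" using c2 by (simp add: PF_def count_prime_factorization_prime)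
    then have "Q^2 dvd Q ^ multiplicity Q F" by (rule le_imp_power_dvd)
    also have "\<dots> dvd F" by (rule multiplicity_dvd)
    finally obtain H where H: "F = Q^2 * H" by (auto elim: dvdE)
    have "pderiv F = Q * (Q * pderiv H + 2 * H * pderiv Q)"
      unfolding H by (simp add: pderiv_mult power2_eq_square algebra_simps)
    then have "Q dvd pderiv F" by simp
    then have "Q dvd 1" using pdF by simp
    then show False using pQ by (simp add: prime_def prime_elem_def)
  qed
  define S where "S = set_mset PF"
  have PFS: "PF = mset_set S"
  proof (rule multiset_eqI)
    fix Q
    show "count PF Q = count (mset_set S) Q"
    proof (cases "Q \<in># PF")
      case True
      then have "count PF Q \<noteq> 0" by simp
      then have "count PF Q = 1" using sqf[of Q] by linarith
      then show ?thesis using True by (simp add: count_mset_set' S_def)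
    next
      case False
      then show ?thesis by (simp add: count_mset_set' S_def count_eq_zero_iff)
    qed
  qed
  have finS: "finite S" by (simp add: S_def)
  have primeS: "prime Q" if "Q \<in> S" for Q using that by (auto simp: S_def PF_def)
  have "prod_mset PF = F" using prod_mset_prime_factorization[OF F0] normalize_monic[OF lcF] by (simp add: PF_def)
  then have "F = (\<Prod>Q\<in>S. Q)" by (simp add: PFS prod_unfold_prod_mset)
  then have "m = (\<Sum>Q\<in>S. degree Q)"
    using degF degree_prod_eq_sum_degree[of S "\<lambda>Q. Q"] primeS by force
  also have "\<dots> \<le> (\<Sum>Q\<in>(\<Union>d\<in>{d. d dvd n}. Irr d :: 'a poly set). degree Q)"
  proof (rule sum_mono2)
    show "finite (\<Union>d\<in>{d. d dvd n}. Irr d :: 'a poly set)"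
      using n0 finite_Irr by (auto intro!: finite_UN_I simp: finite_divisors_nat)
    show "S \<subseteq> (\<Union>d\<in>{d. d dvd n}. Irr d)"
    proof
      fix Q assume QS: "Q \<in> S"
      have pQ: "prime Q" using primeS[OF QS] .
      have irr: "irreducible Q" using pQ by (simp add: prime_elem_iff_irreducible[symmetric])
      have mon: "lead_coeff Q = 1" by (rule monic_of_prime[OF pQ])
      have QF: "Q dvd F" using QS by (auto simp: S_def PF_def in_prime_factors_iff)
      obtain \<beta> where \<beta>: "poly (lift Q) \<beta> = 0" using exists_root_lift irreducible_degree_pos[OF irr] by blast
      have "poly (lift F) \<beta> = 0" using root_lift_iff_dvd[OF irr \<beta>] QF by blast
      then have "\<beta> ^ (CARD('a)^n) = \<beta>" by (simp add: F_def poly_monom m_def)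
      then have "degree Q dvd n" by (rule period_dvd[OF irr mon \<beta>])
      then show "Q \<in> (\<Union>d\<in>{d. d dvd n}. Irr d)" using irr mon by (auto simp: Irr_def)
    qed
  qed simp
  also have "\<dots> = (\<Sum>d\<in>{d. d dvd n}. (\<Sum>Q\<in>(Irr d :: 'a poly set). degree Q))"
    by (rule sum.UNION_disjoint) (use n0 finite_Irr in \<open>auto simp: finite_divisors_nat Irr_def\<close>)
  also have "\<dots> = (\<Sum>d\<in>{d. d dvd n}. d * card (Irr d :: 'a poly set))"
    by (rule sum.cong) (auto simp: Irr_def)
  finally show ?thesis by (simp add: m_def)
qed



lemma geom_le2:
  assumes "(q::nat) \<ge> 2" shows "(\<Sum>d\<le>m. q^d) \<le> 2 * q^m"
proof (induction m)
  case 0 then show ?case by simp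
next
  case (Suc m)
  have "2 * q^m \<le> q^Suc m" using assms by simp
  moreover have "(\<Sum>d\<le>Suc m. q^d) = (\<Sum>d\<le>m. q^d) + q^Suc m" by simp
  ultimately show ?case using Suc by linarith
qed

lemma four_g_le: "4 * g \<le> (5::nat)^(g+1)"
proof (induction g)
  case 0 then show ?case by simp
next
  case (Suc g)
  have a: "(1::nat) \<le> 5^g" by simp
  have b: "4 * g \<le> 5 * (5::nat)^g" using Suc by simp
  have c: "(5::nat) ^ (Suc g + 1) = 25 * 5^g" by simp
  have d: "4 * Suc g = 4 + 4 * g" by simp
  show ?case unfolding c d using a b by linarith
qed

lemma irr_count_lower:
  assumes q5: "CARD('a::{field_gcd,finite}) \<ge> 5"
  shows "CARD('a)^(2*g+1) \<le> 2 * (2*g+1) * card (Irr (2*g+1) :: 'a poly set)"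
proof -
  define n where "n = 2*g+1"
  define q where "q = CARD('a)"
  define I where "I = (\<lambda>d. card (Irr d :: 'a poly set))"
  define D where "D = {d. d dvd n}"
  have finD: "finite D" unfolding D_def n_def by (simp add: finite_divisors_nat)
  have nD: "n \<in> D" by (simp add: D_def)
  have "q^n \<le> (\<Sum>d\<in>D. d * I d)" using gauss_lower[where ?'a='a, of n] by (simp add: n_def q_def I_def D_def)
  also have "\<dots> = n * I n + (\<Sum>d\<in>D - {n}. d * I d)" using sum.remove[OF finD nD] by simp
  also have "(\<Sum>d\<in>D - {n}. d * I d) \<le> (\<Sum>d\<in>{1..g}. d * I d)"
  proof (rule sum_mono2)
    show "D - {n} \<subseteq> {1..g}"
    proof
      fix d assume d: "d \<in> D - {n}"
      then obtain k where k: "n = d * k" by (auto simp: D_def elim: dvdE)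
      have "d \<noteq> 0"
      proof
        assume "d = 0" then show False using k by (simp add: n_def)
      qed
      moreover have "k \<noteq> 1" using k d by (auto simp: n_def)
      moreover have "k \<noteq> 0"
      proof
        assume "k = 0" then show False using k by (simp add: n_def)
      qed
      ultimately have "k \<ge> 2" by linarith
      then have "2 * d \<le> k * d" by (rule mult_le_mono1)
      then have "2 * d \<le> n" using k by (simp add: mult.commute)
      then show "d \<in> {1..g}" using \<open>d \<noteq> 0\<close> by (simp add: n_def)
    qed
  qed auto
  also have "\<dots> \<le> (\<Sum>d\<in>{1..g}. g * q^d)"
  proof (rule sum_mono)
    fix d assume "d \<in> {1..g}"
    then have "d \<le> g" by simp
    moreover have "I d \<le> q^d" unfolding I_def q_def by (rule card_Irr_le)
    ultimately show "d * I d \<le> g * q^d" by (rule mult_le_mono)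
  qed
  also have "\<dots> = g * (\<Sum>d\<in>{1..g}. q^d)" by (simp add: sum_distrib_left)
  also have "(\<Sum>d\<in>{1..g}. q^d) \<le> (\<Sum>d\<le>g. q^d)" by (rule sum_mono2) auto
  also have "\<dots> \<le> 2 * q^g" by (rule geom_le2) (use q5 in \<open>simp add: q_def\<close>)
  finally have A: "q^n \<le> n * I n + g * (2 * q^g)" by simp
  have "4 * g \<le> 5^(g+1)" by (rule four_g_le)
  also have "(5::nat)^(g+1) \<le> q^(g+1)" by (rule power_mono) (use q5 in \<open>auto simp: q_def\<close>)
  finally have "q^g * (4 * g) \<le> q^g * q^(g+1)" by simp
  also have "q^g * q^(g+1) = q^n" unfolding n_def power_add[symmetric] by (simp add: mult_2)
  finally have B: "4 * (g * q^g) \<le> q^n" by (simp add: algebra_simps)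
  from A B have "q^n \<le> 2 * n * I n" by linarith
  then show ?thesis by (simp add: n_def q_def I_def)
qed



theorem corollary2p6:
  assumes "CARD('a::{field_gcd,finite}) mod 4 = 1"
  shows "\<exists>c>0. \<exists>G. \<forall>g\<ge>G.
           real (card {P :: 'a poly. lead_coeff P = 1 \<and> irreducible P \<and> degree P = 2*g+1
                                       \<and> L_half P \<noteq> 0})
           \<ge> c * real CARD('a) ^ (2*g+1) / (real (2*g+1))^2"
proof (intro exI[of _ "1/2"] conjI exI[of _ 0] allI impI)
  fix g :: nat
  have q5: "CARD('a) \<ge> 5" using assms card_field_ge2[where ?'a='a] by presburger
  define n where "n = 2*g+1"
  define I where "I = card (Irr n :: 'a poly set)"
  have set_eq: "{P :: 'a poly. lead_coeff P = 1 \<and> irreducible P \<and> degree P = 2*g+1 \<and> L_half P \<noteq> 0}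
      = Irr n"
    using L_half_ne0[OF _ _ _ assms] by (auto simp: Irr_def n_def)
  have nat_ineq: "CARD('a)^n \<le> 2 * n * I"
    using irr_count_lower[OF q5, of g] by (simp add: n_def I_def)
  then have r: "real CARD('a) ^ n \<le> 2 * real n * real I"
    by (metis of_nat_le_iff of_nat_mult of_nat_numeral of_nat_power)
  have n1: "real n \<ge> 1" by (simp add: n_def)
  have "1/2 * real CARD('a) ^ n / (real n)^2 \<le> 1/2 * (2 * real n * real I) / (real n)^2"
    using r n1 by (intro divide_right_mono mult_left_mono) auto
  also have "\<dots> = real I / real n" using n1 by (simp add: power2_eq_square field_simps)
  also have "\<dots> \<le> real I" using n1 by (simp add: divide_le_eq mult_le_cancel_left1)
  finally have fin: "1/2 * real CARD('a) ^ n / (real n)^2 \<le> real I" .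
  have cI: "card {P :: 'a poly. lead_coeff P = 1 \<and> irreducible P \<and> degree P = 2*g+1 \<and> L_half P \<noteq> 0} = I"
    unfolding I_def by (rule arg_cong[OF set_eq])
  show "1/2 * real CARD('a) ^ (2*g+1) / (real (2*g+1))^2 \<le>
      real (card {P :: 'a poly. lead_coeff P = 1 \<and> irreducible P \<and> degree P = 2*g+1 \<and> L_half P \<noteq> 0})"
    unfolding cI using fin by (simp only: n_def)
qed simp


end
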